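(* Let $d\ge 1$, $T\ge 1$, let $\mathcal{X}\subseteq\mathbb{R}^d$ be a non-empty closed convex set, and let $0<\mu\le L$. Let $f_1,\dots,f_T:\mathcal{X}\to[0,\infty)$ be differentiable with $\frac{\mu}{2}\|y-x\|^2\le f_t(y)-f_t(x)-\langle\nabla f_t(x),y-x\rangle\le\frac{L}{2}\|y-x\|^2$ for all $t$ and $x,y\in\mathcal{X}$. Let $x_1,\dots,x_T$ be the iterates of the OMGD algorithm with $K=\lceil\frac{L+\mu}{2\mu}\ln4\rceil$ from a starting point $x_0\in\mathcal{X}$. Then $$\sum_{t=1}^T\|x_t-x_t^\star\|^2\le 2\|x_1-x_1^\star\|^2+4\mathcal{P}_{2,T}^\star.$$
   Context: $x_t^\star=\arg\min_{x\in\mathcal{X}}f_t(x)$ and $\mathcal{P}_{2,T}^\star=\sum_{t=2}^T\|x_t^\star-x_{t-1}^\star\|^2$. OMGD with parameter $K$: $x_1=x_0$; for $t=2,\dots,T$, $z_t^{(0)}=x_{t-1}$, $z_t^{(k)}=\Pi_{\mathcal{X}}\big(z_t^{(k-1)}-\frac1L\nabla f_{t-1}(z_t^{(k-1)})\big)$ ($k=1,\dots,K$), $x_t=z_t^{(K)}$, where $\Pi_{\mathcal{X}}$ is Euclidean projection onto $\mathcal{X}$. *)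

theory Defs
  imports "HOL-Analysis.Analysis"
begin

definition argmin_on :: "'a set \<Rightarrow> ('a \<Rightarrow> real) \<Rightarrow> 'a" where
  "argmin_on X h = (SOME x. x \<in> X \<and> (\<forall>y\<in>X. h x \<le> h y))"

definition pgd_step :: "'a::euclidean_space set \<Rightarrow> real \<Rightarrow> ('a \<Rightarrow> 'a) \<Rightarrow> 'a \<Rightarrow> 'a" where
  "pgd_step X L gr z = closest_point X (z - (1 / L) *\<^sub>R gr z)"

fun omgd :: "'a::euclidean_space set \<Rightarrow> real \<Rightarrow> (nat \<Rightarrow> 'a \<Rightarrow> 'a) \<Rightarrow> nat \<Rightarrow> 'a \<Rightarrow> nat \<Rightarrow> 'a" where
  "omgd X L g K x0 0 = x0"
| "omgd X L g K x0 (Suc 0) = x0"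
| "omgd X L g K x0 (Suc (Suc n)) = (pgd_step X L (g (Suc n)) ^^ K) (omgd X L g K x0 (Suc n))"

end

theory Submission
  imports Defs
begin

lemma exists_min:
  fixes X :: "'a::euclidean_space set" and h :: "'a \<Rightarrow> real"
  assumes "closed X" "X \<noteq> {}" "0 < \<mu>"
    and cont: "continuous_on X h"
    and sc: "\<And>x y. x \<in> X \<Longrightarrow> y \<in> X \<Longrightarrow> \<mu> / 2 * (norm (y - x))\<^sup>2 \<le> h y - h x - gr x \<bullet> (y - x)"
  shows "\<exists>m\<in>X. \<forall>y\<in>X. h m \<le> h y"
proof -
  obtain a where a: "a \<in> X" using assms(2) by blast
  define R where "R = 2 * norm (gr a) / \<mu> + 1"
  define S where "S = X \<inter> cball a R"
  have "compact S" unfolding S_def using assms(1) by (simp add: closed_Int_compact)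
  moreover have "S \<noteq> {}" using a unfolding S_def R_def using assms(3)
    by (auto intro!: exI[of _ a] simp: divide_nonneg_pos)
  moreover have "continuous_on S h" using cont unfolding S_def by (rule continuous_on_subset) auto
  ultimately obtain m where m: "m \<in> S" "\<And>y. y \<in> S \<Longrightarrow> h m \<le> h y"
    using continuous_attains_inf by metis
  have "h m \<le> h y" if y: "y \<in> X" for y
  proof (cases "y \<in> cball a R")
    case True then show ?thesis using m y unfolding S_def by auto
  next
    case False
    then have d: "norm (y - a) > R" by (simp add: dist_norm norm_minus_commute)
    have "2 * norm (gr a) / \<mu> < norm (y - a)" using d unfolding R_def by linarith
    then have g: "norm (gr a) < \<mu> / 2 * norm (y - a)" using assms(3) by (simp add: field_simps)
    have "\<bar>gr a \<bullet> (y - a)\<bar> \<le> norm (gr a) * norm (y - a)" by (rule Cauchy_Schwarz_ineq2)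
    also have "\<dots> \<le> \<mu> / 2 * norm (y - a) * norm (y - a)"
      using g by (intro mult_right_mono) auto
    finally have "\<bar>gr a \<bullet> (y - a)\<bar> \<le> \<mu> / 2 * (norm (y - a))\<^sup>2" by (simp add: power2_eq_square)
    moreover have "\<mu> / 2 * (norm (y - a))\<^sup>2 \<le> h y - h a - gr a \<bullet> (y - a)" using sc a y by blast
    moreover have "h m \<le> h a" using m a unfolding S_def using R_def assms(3)
      by (auto simp: divide_nonneg_pos)
    ultimately show ?thesis by linarith
  qed
  then show ?thesis using m unfolding S_def by auto
qed

lemma first_order:
  fixes X :: "'a::euclidean_space set" and h :: "'a \<Rightarrow> real"
  assumes "convex X" "0 < L" "m \<in> X" "y \<in> X"
    and mmin: "\<forall>y\<in>X. h m \<le> h y"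
    and up: "\<And>x y. x \<in> X \<Longrightarrow> y \<in> X \<Longrightarrow> h y - h x - gr x \<bullet> (y - x) \<le> L / 2 * (norm (y - x))\<^sup>2"
  shows "gr m \<bullet> (y - m) \<ge> 0"
proof (rule ccontr)
  assume neg: "\<not> ?thesis"
  define d where "d = y - m"
  define c where "c = gr m \<bullet> d"
  have c: "c < 0" using neg unfolding c_def d_def by simp
  have dpos: "(norm d)\<^sup>2 > 0" using c unfolding c_def by auto
  define s where "s = min 1 (- c / (L * (norm d)\<^sup>2))"
  have Lp: "L * (norm d)\<^sup>2 > 0" using dpos assms(2) by simp
  have s0: "0 < s" using c Lp unfolding s_def by (auto simp: divide_neg_pos)
  have s1: "s \<le> 1" unfolding s_def by simp
  have sL: "L * s * (norm d)\<^sup>2 \<le> - c"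
  proof -
    have "s \<le> - c / (L * (norm d)\<^sup>2)" unfolding s_def by simp
    then show ?thesis using dpos assms(2) by (simp add: field_simps mult.commute mult.left_commute)
  qed
  define ys where "ys = m + s *\<^sub>R d"
  have "ys = (1 - s) *\<^sub>R m + s *\<^sub>R y" unfolding ys_def d_def by (simp add: algebra_simps)
  then have ysX: "ys \<in> X" using assms(1,3,4) s0 s1 by (simp add: convex_def)
  have e1: "gr m \<bullet> (ys - m) = s * c" unfolding ys_def c_def by simp
  have e2: "(norm (ys - m))\<^sup>2 = s^2 * (norm d)\<^sup>2" unfolding ys_def by (simp add: power_mult_distrib)
  have A: "h ys - h m - s * c \<le> L / 2 * (s^2 * (norm d)\<^sup>2)" using up[OF assms(3) ysX] unfolding e1 e2 .
  have "h m \<le> h ys" using mmin ysX by blast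
  with A have "- (s * c) \<le> L / 2 * (s^2 * (norm d)\<^sup>2)" by linarith
  then have "s * (- c) \<le> s * (L / 2 * s * (norm d)\<^sup>2)" by (simp add: power2_eq_square algebra_simps)
  then have "- c \<le> L / 2 * s * (norm d)\<^sup>2" using s0 by (rule mult_left_le_imp_le)
  with sL c show False by linarith
qed

lemma pgd_contract:
  fixes X :: "'a::euclidean_space set" and h :: "'a \<Rightarrow> real"
  assumes "convex X" "closed X" "0 < \<mu>" "\<mu> \<le> L" "z \<in> X" "m \<in> X"
    and mmin: "\<forall>y\<in>X. h m \<le> h y"
    and lo: "\<And>x y. x \<in> X \<Longrightarrow> y \<in> X \<Longrightarrow> \<mu> / 2 * (norm (y - x))\<^sup>2 \<le> h y - h x - gr x \<bullet> (y - x)"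
    and up: "\<And>x y. x \<in> X \<Longrightarrow> y \<in> X \<Longrightarrow> h y - h x - gr x \<bullet> (y - x) \<le> L / 2 * (norm (y - x))\<^sup>2"
  shows "closest_point X (z - (1 / L) *\<^sub>R gr z) \<in> X \<and>
         (L + \<mu>) * (norm (closest_point X (z - (1 / L) *\<^sub>R gr z) - m))\<^sup>2 \<le> (L - \<mu>) * (norm (z - m))\<^sup>2"
proof -
  define p where "p = closest_point X (z - (1 / L) *\<^sub>R gr z)"
  have L0: "0 < L" using assms(3,4) by linarith
  have pX: "p \<in> X" unfolding p_def using assms(2,5) by (auto intro: closest_point_in_set)
  define u where "u = z - p"
  define v where "v = p - m"
  have zm: "z - m = u + v" unfolding u_def v_def by simp
  have i: "inner ((z - (1 / L) *\<^sub>R gr z) - p) (m - p) \<le> 0"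
    unfolding p_def using assms(1,2,6) by (rule closest_point_dot)
  have i2: "- (u \<bullet> v) + (1 / L) * (gr z \<bullet> v) \<le> 0"
    using i unfolding u_def v_def by (simp add: algebra_simps inner_diff_left inner_diff_right)
  have i3: "gr z \<bullet> v \<le> L * (u \<bullet> v)"
  proof -
    have "L * ((1 / L) * (gr z \<bullet> v)) \<le> L * (u \<bullet> v)" using i2 L0 by (intro mult_left_mono) auto
    then show ?thesis using L0 by simp
  qed
  have ii: "h p - h z - gr z \<bullet> (p - z) \<le> L / 2 * (norm (p - z))\<^sup>2" using up assms(5) pX by blast
  have iii: "\<mu> / 2 * (norm (m - z))\<^sup>2 \<le> h m - h z - gr z \<bullet> (m - z)" using lo assms(5,6) by blast
  have fo: "gr m \<bullet> (p - m) \<ge> 0"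
    using first_order[OF assms(1) L0 assms(6) pX mmin up] by blast
  have iv0: "\<mu> / 2 * (norm (p - m))\<^sup>2 \<le> h p - h m - gr m \<bullet> (p - m)" using lo assms(6) pX by blast
  have n1: "(norm (p - z))\<^sup>2 = u \<bullet> u" unfolding u_def by (simp only: norm_minus_commute[of p z] power2_norm_eq_inner)
  have n2: "(norm (m - z))\<^sup>2 = u \<bullet> u + 2 * (u \<bullet> v) + v \<bullet> v"
    by (simp only: norm_minus_commute[of m z] zm power2_norm_eq_inner inner_add_left inner_add_right inner_commute[of v u])
  have n3: "(norm (p - m))\<^sup>2 = v \<bullet> v" unfolding v_def by (simp add: power2_norm_eq_inner)
  have g1: "gr z \<bullet> (p - z) = - (gr z \<bullet> u)" unfolding u_def by (simp add: inner_diff_right)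
  have g2: "gr z \<bullet> (m - z) = - (gr z \<bullet> u) - gr z \<bullet> v" unfolding u_def v_def by (simp add: inner_diff_right)
  have key: "\<mu> / 2 * (v \<bullet> v) \<le> L * (u \<bullet> v) + L / 2 * (u \<bullet> u) - \<mu> / 2 * (u \<bullet> u + 2 * (u \<bullet> v) + v \<bullet> v)"
    using ii iii fo iv0 i3 unfolding n1 n2 n3 g1 g2 by linarith
  have "(L + \<mu>) * (v \<bullet> v) \<le> (L - \<mu>) * (u \<bullet> u + 2 * (u \<bullet> v) + v \<bullet> v)"
    using key by (simp add: algebra_simps)
  then show ?thesis using pX unfolding p_def[symmetric] n3 by (simp add: n2[symmetric] norm_minus_commute)
qed

lemma pgd_iter_in:
  assumes "closed X" "X \<noteq> {}" "z \<in> X"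
  shows "(pgd_step X L gr ^^ K) z \<in> X"
  using assms by (cases K) (auto simp: pgd_step_def intro: closest_point_in_set)

lemma pgd_iter:
  fixes X :: "'a::euclidean_space set" and h :: "'a \<Rightarrow> real"
  assumes "convex X" "closed X" "0 < \<mu>" "\<mu> \<le> L" "m \<in> X"
    and mmin: "\<forall>y\<in>X. h m \<le> h y"
    and lo: "\<And>x y. x \<in> X \<Longrightarrow> y \<in> X \<Longrightarrow> \<mu> / 2 * (norm (y - x))\<^sup>2 \<le> h y - h x - gr x \<bullet> (y - x)"
    and up: "\<And>x y. x \<in> X \<Longrightarrow> y \<in> X \<Longrightarrow> h y - h x - gr x \<bullet> (y - x) \<le> L / 2 * (norm (y - x))\<^sup>2"
  shows "\<forall>z\<in>X. (pgd_step X L gr ^^ K) z \<in> X \<and>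
     (norm ((pgd_step X L gr ^^ K) z - m))\<^sup>2 \<le> ((L - \<mu>) / (L + \<mu>)) ^ K * (norm (z - m))\<^sup>2"
proof (induction K)
  case 0
  then show ?case by simp
next
  case (Suc K)
  show ?case
  proof
    fix z assume z: "z \<in> X"
    define w where "w = (pgd_step X L gr ^^ K) z"
    have w: "w \<in> X" "(norm (w - m))\<^sup>2 \<le> ((L - \<mu>) / (L + \<mu>)) ^ K * (norm (z - m))\<^sup>2"
      using Suc z unfolding w_def by auto
    have c: "closest_point X (w - (1 / L) *\<^sub>R gr w) \<in> X \<and>
         (L + \<mu>) * (norm (closest_point X (w - (1 / L) *\<^sub>R gr w) - m))\<^sup>2 \<le> (L - \<mu>) * (norm (w - m))\<^sup>2"
      by (rule pgd_contract[OF assms(1-4) w(1) assms(5) mmin lo up])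
    have eq: "(pgd_step X L gr ^^ Suc K) z = closest_point X (w - (1 / L) *\<^sub>R gr w)"
      unfolding w_def by (simp add: pgd_step_def)
    have pos: "L + \<mu> > 0" using assms(3,4) by linarith
    have q0: "(L - \<mu>) / (L + \<mu>) \<ge> 0" using assms(3,4) by simp
    have "(norm (closest_point X (w - (1 / L) *\<^sub>R gr w) - m))\<^sup>2 \<le> (L - \<mu>) / (L + \<mu>) * (norm (w - m))\<^sup>2"
      using c pos by (simp add: field_simps)
    also have "\<dots> \<le> (L - \<mu>) / (L + \<mu>) * (((L - \<mu>) / (L + \<mu>)) ^ K * (norm (z - m))\<^sup>2)"
      using w(2) q0 by (rule mult_left_mono)
    finally show "(pgd_step X L gr ^^ Suc K) z \<in> X \<and>
     (norm ((pgd_step X L gr ^^ Suc K) z - m))\<^sup>2 \<le> ((L - \<mu>) / (L + \<mu>)) ^ Suc K * (norm (z - m))\<^sup>2"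
      using c unfolding eq by (simp add: mult.assoc)
  qed
qed

lemma rate:
  fixes \<mu> L :: real
  assumes "0 < \<mu>" "\<mu> \<le> L"
  shows "((L - \<mu>) / (L + \<mu>)) ^ (nat \<lceil>(L + \<mu>) / (2 * \<mu>) * ln 4\<rceil>) \<le> 1 / 4"
proof -
  define K where "K = nat \<lceil>(L + \<mu>) / (2 * \<mu>) * ln 4\<rceil>"
  define r where "r = 2 * \<mu> / (L + \<mu>)"
  have pos: "L + \<mu> > 0" using assms by linarith
  have q: "(L - \<mu>) / (L + \<mu>) = 1 - r" unfolding r_def using pos by (simp add: field_simps)
  have q0: "0 \<le> 1 - r" using q assms by (metis diff_ge_0_iff_ge divide_nonneg_pos pos)
  have "1 - r \<le> exp (- r)" using exp_ge_add_one_self[of "- r"] by simp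
  then have "(1 - r) ^ K \<le> exp (- r) ^ K" using q0 by (rule power_mono)
  also have "\<dots> = exp (- (r * K))" by (simp add: exp_of_nat_mult[symmetric] mult.commute)
  also have "\<dots> \<le> exp (- ln 4)"
  proof -
    have "(L + \<mu>) / (2 * \<mu>) * ln 4 \<le> real K" unfolding K_def by (rule real_nat_ceiling_ge)
    then have "r * ((L + \<mu>) / (2 * \<mu>) * ln 4) \<le> r * real K"
      by (rule mult_left_mono) (use pos assms in \<open>simp add: r_def\<close>)
    moreover have "r * ((L + \<mu>) / (2 * \<mu>)) = 1" unfolding r_def using pos assms by simp
    then have "r * ((L + \<mu>) / (2 * \<mu>) * ln 4) = ln 4" by (metis mult.assoc mult_1)
    ultimately show ?thesis by simp
  qed
  also have "\<dots> = 1 / 4" by (simp add: exp_minus)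
  finally show ?thesis unfolding q K_def .
qed

lemma sum_rec:
  fixes a d :: "nat \<Rightarrow> real"
  assumes "1 \<le> T" "\<And>t. 2 \<le> t \<Longrightarrow> t \<le> T \<Longrightarrow> 2 * a t \<le> a (t - 1) + 4 * d t"
  shows "(\<Sum>t=1..T. a t) + a T \<le> 2 * a 1 + 4 * (\<Sum>t=2..T. d t)"
  using assms
proof (induction T rule: nat_induct_at_least)
  case base
  then show ?case by simp
next
  case (Suc n)
  have IH: "(\<Sum>t=1..n. a t) + a n \<le> 2 * a 1 + 4 * (\<Sum>t=2..n. d t)" using Suc by auto
  have st: "2 * a (Suc n) \<le> a n + 4 * d (Suc n)" using Suc.prems(1)[of "Suc n"] Suc.hyps by simp
  have s1: "(\<Sum>t=1..Suc n. a t) = (\<Sum>t=1..n. a t) + a (Suc n)" using Suc.hyps by simp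
  have s2: "(\<Sum>t=2..Suc n. d t) = (\<Sum>t=2..n. d t) + d (Suc n)" using Suc.hyps by simp
  show ?case unfolding s1 s2 using IH st by (simp add: distrib_left)
qed

lemma sq_tri:
  fixes x y z :: "'a::real_normed_vector"
  shows "(norm (x - z))\<^sup>2 \<le> 2 * (norm (x - y))\<^sup>2 + 2 * (norm (y - z))\<^sup>2"
proof -
  have "norm (x - z) \<le> norm (x - y) + norm (y - z)" by (rule norm_diff_triangle_ineq[of x y y z, simplified] | metis norm_triangle_sub diff_add_cancel add_diff_eq norm_triangle_ineq)
  then have "(norm (x - z))\<^sup>2 \<le> (norm (x - y) + norm (y - z))\<^sup>2" by (simp add: power_mono)
  also have "\<dots> \<le> 2 * (norm (x - y))\<^sup>2 + 2 * (norm (y - z))\<^sup>2"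
    using sum_squares_ge_zero by (smt (verit) power2_sum zero_le_power2 power2_diff)
  finally show ?thesis .
qed

theorem lemma1:
  fixes X :: "'a::euclidean_space set"
    and f :: "nat \<Rightarrow> 'a \<Rightarrow> real"
    and g :: "nat \<Rightarrow> 'a \<Rightarrow> 'a"
    and \<mu> L :: real and T :: nat and x0 :: 'a
  assumes "T \<ge> 1"
    and "X \<noteq> {}" and "closed X" and "convex X"
    and "0 < \<mu>" and "\<mu> \<le> L"
    and "\<And>t x. 1 \<le> t \<Longrightarrow> t \<le> T \<Longrightarrow> x \<in> X \<Longrightarrow> f t x \<ge> 0"
    and "\<And>t x. 1 \<le> t \<Longrightarrow> t \<le> T \<Longrightarrow> x \<in> X \<Longrightarrow>
           (f t has_derivative (\<lambda>h. g t x \<bullet> h)) (at x within X)"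
    and "\<And>t x y. 1 \<le> t \<Longrightarrow> t \<le> T \<Longrightarrow> x \<in> X \<Longrightarrow> y \<in> X \<Longrightarrow>
           \<mu> / 2 * (norm (y - x))\<^sup>2 \<le> f t y - f t x - g t x \<bullet> (y - x)"
    and "\<And>t x y. 1 \<le> t \<Longrightarrow> t \<le> T \<Longrightarrow> x \<in> X \<Longrightarrow> y \<in> X \<Longrightarrow>
           f t y - f t x - g t x \<bullet> (y - x) \<le> L / 2 * (norm (y - x))\<^sup>2"
    and "x0 \<in> X"
  shows "(\<Sum>t=1..T. (norm (omgd X L g (nat \<lceil>(L + \<mu>) / (2 * \<mu>) * ln 4\<rceil>) x0 t
                             - argmin_on X (f t)))\<^sup>2)
         \<le> 2 * (norm (omgd X L g (nat \<lceil>(L + \<mu>) / (2 * \<mu>) * ln 4\<rceil>) x0 1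
                      - argmin_on X (f 1)))\<^sup>2
           + 4 * (\<Sum>t=2..T. (norm (argmin_on X (f t) - argmin_on X (f (t - 1))))\<^sup>2)"
proof -
  define K where "K = nat \<lceil>(L + \<mu>) / (2 * \<mu>) * ln 4\<rceil>"
  define x where "x = omgd X L g K x0"
  define xs where "xs = (\<lambda>t. argmin_on X (f t))"
  define q where "q = (L - \<mu>) / (L + \<mu>)"
  have qK: "q ^ K \<le> 1 / 4" unfolding q_def K_def using rate assms(5,6) by blast
  have opt: "xs t \<in> X \<and> (\<forall>y\<in>X. f t (xs t) \<le> f t y)" if t: "1 \<le> t" "t \<le> T" for t
  proof -
    have "continuous_on X (f t)" using assms(8)[OF t] by (rule has_derivative_continuous_on)
    then have "\<exists>m\<in>X. \<forall>y\<in>X. f t m \<le> f t y"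
      using exists_min[OF assms(3,2,5)] assms(9)[OF t] by blast
    then show ?thesis unfolding xs_def argmin_on_def by (rule someI_ex[where P="\<lambda>m. m \<in> X \<and> (\<forall>y\<in>X. f t m \<le> f t y)", OF bexE]) blast+
  qed
  have xX: "x n \<in> X \<and> x (Suc n) \<in> X" for n
  proof (induction n)
    case 0 then show ?case using assms(11) unfolding x_def by simp
  next
    case (Suc n)
    then show ?case unfolding x_def using pgd_iter_in[OF assms(3,2)] by simp
  qed
  define a where "a = (\<lambda>t. (norm (x t - xs t))\<^sup>2)"
  define d where "d = (\<lambda>t. (norm (xs t - xs (t - 1)))\<^sup>2)"
  have step: "2 * a t \<le> a (t - 1) + 4 * d t" if t: "2 \<le> t" "t \<le> T" for t
  proof -
    obtain n where n: "t = Suc (Suc n)" using t by (metis add_2_eq_Suc le_Suc_ex)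
    have s1: "1 \<le> Suc n" "Suc n \<le> T" using t n by auto
    have o: "xs (Suc n) \<in> X" "\<forall>y\<in>X. f (Suc n) (xs (Suc n)) \<le> f (Suc n) y" using opt[OF s1] by auto
    have it: "(norm ((pgd_step X L (g (Suc n)) ^^ K) (x (Suc n)) - xs (Suc n)))\<^sup>2 \<le> q ^ K * (norm (x (Suc n) - xs (Suc n)))\<^sup>2"
      using pgd_iter[OF assms(4,3,5,6) o(1) o(2), of "g (Suc n)" K] assms(9,10)[OF s1] xX[of n] unfolding q_def by blast
    have xt: "x t = (pgd_step X L (g (Suc n)) ^^ K) (x (Suc n))" unfolding x_def n by simp
    have "(norm (x t - xs (Suc n)))\<^sup>2 \<le> 1 / 4 * a (t - 1)"
      using it qK unfolding xt[symmetric] a_def n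
      by (metis (no_types, lifting) diff_Suc_1 mult_right_mono order_trans zero_le_power2)
    moreover have "a t \<le> 2 * (norm (x t - xs (Suc n)))\<^sup>2 + 2 * d t"
      unfolding a_def d_def using sq_tri[of "x t" "xs t" "xs (Suc n)"] n
      by (simp add: norm_minus_commute)
    ultimately show ?thesis by linarith
  qed
  have "(\<Sum>t=1..T. a t) + a T \<le> 2 * a 1 + 4 * (\<Sum>t=2..T. d t)"
    using sum_rec[of T a d] step assms(1) by blast
  moreover have "a T \<ge> 0" unfolding a_def by simp
  ultimately show ?thesis unfolding a_def d_def x_def xs_def K_def by linarith
qed

end
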